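(* Let $\pi=(d_1\le\cdots\le d_n)$ be a graphical sequence and let $g(\pi)=\max\{i\in\mathbb{Z}^+ : f(i)<\infty\}$, with $f$ as defined in the context. Then there is a graphical sequence $\pi'$ of length $n$ with $\pi'\le\pi$ termwise which has a realization that is a disjoint union of exactly $g(\pi)$ cliques (so this realization has independence number $g(\pi)$). Consequently, for any integer $k>g(\pi)$, $\pi$ is minorized by a graphical sequence having a realization with independence number less than $k$.
   Context: Graphs are finite and simple; a graphical sequence is a nondecreasing integer sequence that is the degree sequence of some graph. Define $f:\mathbb{Z}^+\to\{d_1,\dots,d_n,\infty\}$ recursively, tracking an index: $f(1)=d_1$ (with index $j_1=1$); if $f(i)=d_{j_i}$ is finite then, if $j_i+f(i)+1\le n$, set $j_{i+1}=j_i+f(i)+1$ and $f(i+1)=d_{j_{i+1}}$, and otherwise $f(i+1)=\infty$; if $f(i)=\infty$ then $f(i+1)=\infty$. *)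

theory Defs
  imports Main "HOL-Library.Extended_Nat"
begin

text \<open>Sequences d_1..d_n are lists d of length n; d_j is d ! (j - 1).
  Graphs on vertex set {0..<n} are symmetric irreflexive relations E;
  vertex i (0-based) corresponds to term d_(i+1).\<close>

definition realizes :: "(nat \<Rightarrow> nat \<Rightarrow> bool) \<Rightarrow> nat list \<Rightarrow> bool" where
  "realizes E d \<longleftrightarrow>
     (\<forall>i j. E i j \<longrightarrow> i < length d \<and> j < length d) \<and>
     (\<forall>i j. E i j \<longrightarrow> E j i) \<and> (\<forall>i. \<not> E i i) \<and>
     (\<forall>i < length d. card {j. j < length d \<and> E i j} = d ! i)"

definition graphical :: "nat list \<Rightarrow> bool" where
  "graphical d \<longleftrightarrow> sorted d \<and> (\<exists>E. realizes E d)"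

text \<open>Index j_i (1-based) of the recursion; idx d m is j_(m+1), None once f is infinite.\<close>
primrec idx :: "nat list \<Rightarrow> nat \<Rightarrow> nat option" where
  "idx d 0 = Some 1"
| "idx d (Suc m) = (case idx d m of None \<Rightarrow> None
     | Some j \<Rightarrow> (if j + d ! (j - 1) + 1 \<le> length d then Some (j + d ! (j - 1) + 1) else None))"

definition fseq :: "nat list \<Rightarrow> nat \<Rightarrow> enat" where
  "fseq d i = (case idx d (i - 1) of None \<Rightarrow> \<infinity> | Some j \<Rightarrow> enat (d ! (j - 1)))"

definition gval :: "nat list \<Rightarrow> nat" where
  "gval d = Max {i. 1 \<le> i \<and> fseq d i < \<infinity>}"

definition minorizes :: "nat list \<Rightarrow> nat list \<Rightarrow> bool" where
  "minorizes d' d \<longleftrightarrow> length d' = length d \<and> (\<forall>i < length d. d' ! i \<le> d ! i)"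

definition disjoint_union_of_cliques :: "nat \<Rightarrow> (nat \<Rightarrow> nat \<Rightarrow> bool) \<Rightarrow> nat \<Rightarrow> bool" where
  "disjoint_union_of_cliques n E k \<longleftrightarrow>
     (\<exists>c :: nat \<Rightarrow> nat. c ` {..<n} = {..<k} \<and>
        (\<forall>i < n. \<forall>j < n. E i j \<longleftrightarrow> i \<noteq> j \<and> c i = c j))"

definition independence_number :: "nat \<Rightarrow> (nat \<Rightarrow> nat \<Rightarrow> bool) \<Rightarrow> nat" where
  "independence_number n E =
     Max {card S | S. S \<subseteq> {..<n} \<and> (\<forall>x\<in>S. \<forall>y\<in>S. \<not> E x y)}"

end

theory Submission
  imports Defs "HOL-Combinatorics.List_Permutation"
begin

lemma idx_ge1: "idx d m = Some j \<Longrightarrow> j \<ge> 1"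
  by (induction m arbitrary: j) (auto split: option.splits if_splits)

lemma idx_None_mono: "idx d m = None \<Longrightarrow> m \<le> m' \<Longrightarrow> idx d m' = None"
proof (induction m' )
  case 0 then show ?case by simp
next
  case (Suc m') then show ?case by (cases "m = Suc m'") auto
qed

lemma idx_shift:
  assumes "d ! 0 + 1 < length d"
  shows "idx d (Suc m) = map_option (\<lambda>j. j + (d!0+1)) (idx (drop (d!0+1) d) m)"
proof (induction m)
  case 0 then show ?case using assms by simp
next
  case (Suc m)
  show ?case
  proof (cases "idx (drop (d!0+1) d) m")
    case None then show ?thesis using Suc by simp
  next
    case (Some j)
    have j1: "j \<ge> 1" using idx_ge1[OF Some] .
    have nth: "drop (d!0+1) d ! (j-1) = d ! (j + (d!0+1) - 1)"
      using assms j1 by (simp add: nth_drop add.commute)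
    show ?thesis using Suc Some j1 assms nth by auto
  qed
qed

lemma idx_stop:
  assumes "\<not> d ! 0 + 1 < length d"
  shows "idx d (Suc m) = None"
proof -
  have "idx d 1 = None" using assms by simp
  then show ?thesis by (rule idx_None_mono) simp
qed

lemma main_color:
  "sorted d \<Longrightarrow> length d \<ge> 1 \<Longrightarrow> \<exists>k c. k \<ge> 1 \<and> (\<forall>m. idx d m \<noteq> None \<longleftrightarrow> m < k)
     \<and> c ` {..<length d} = {..<k} \<and> (\<forall>v<length d. card {u. u < length d \<and> c u = c v} \<le> Suc (d!v))"
proof (induction "length d" arbitrary: d rule: less_induct)
  case less
  define n where "n = length d"
  define a where "a = d!0 + 1"
  show ?case
  proof (cases "a < n")
    case False
    have idx: "\<forall>m. idx d m \<noteq> None \<longleftrightarrow> m < 1"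
    proof
      fix m show "idx d m \<noteq> None \<longleftrightarrow> m < 1"
        using idx_stop[of d] False by (cases m) (auto simp: a_def n_def)
    qed
    have im: "(\<lambda>_. 0::nat) ` {..<length d} = {..<1}" using less.prems by (auto simp: image_constant_conv lessThan_empty_iff)
    have cd: "card {u. u < length d \<and> (0::nat) = 0} \<le> Suc (d!v)" if "v < length d" for v
    proof -
      have "d!0 \<le> d!v" using less.prems(1) that by (simp add: sorted_iff_nth_mono)
      then show ?thesis using False by (simp add: a_def n_def)
    qed
    show ?thesis using idx im cd by (intro exI[of _ 1] exI[of _ "\<lambda>_. 0::nat"]) simp
  next
    case True
    define r where "r = drop a d"
    have lr: "length r < length d" "length r \<ge> 1" "sorted r"
      using True less.prems by (auto simp: r_def n_def a_def sorted_wrt_drop)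
    obtain k c where k: "k \<ge> 1" and ki: "\<forall>m. idx r m \<noteq> None \<longleftrightarrow> m < k"
      and ci: "c ` {..<length r} = {..<k}"
      and cc: "\<forall>v<length r. card {u. u < length r \<and> c u = c v} \<le> Suc (r!v)"
      using less.hyps[OF lr(1) lr(3) lr(2)] by blast
    define c' where "c' = (\<lambda>v. if v < a then 0 else Suc (c (v - a)))"
    have idx: "\<forall>m. idx d m \<noteq> None \<longleftrightarrow> m < Suc k"
    proof
      fix m show "idx d m \<noteq> None \<longleftrightarrow> m < Suc k"
        using idx_shift[of d] True ki by (cases m) (auto simp: a_def n_def r_def)
    qed
    have lenr: "length r = n - a" by (simp add: r_def n_def)
    have im: "c' ` {..<length d} = {..<Suc k}"
    proof
      show "c' ` {..<length d} \<subseteq> {..<Suc k}"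
      proof
        fix x assume "x \<in> c' ` {..<length d}"
        then obtain v where v: "v < length d" "x = c' v" by auto
        show "x \<in> {..<Suc k}"
        proof (cases "v < a")
          case False
          then have "v - a < length r" using v lenr n_def by auto
          then have "c (v-a) < k" using ci by auto
          then show ?thesis using v False by (simp add: c'_def)
        qed (simp add: v c'_def)
      qed
      show "{..<Suc k} \<subseteq> c' ` {..<length d}"
      proof
        fix x assume x: "x \<in> {..<Suc k}"
        show "x \<in> c' ` {..<length d}"
        proof (cases x)
          case 0
          have "c' 0 = 0" using a_def by (simp add: c'_def)
          then show ?thesis using 0 less.prems by force
        next
          case (Suc y)
          then have "y \<in> c ` {..<length r}" using ci x by auto
          then obtain u where u: "u < length r" "y = c u" by auto
          have "c' (u + a) = x" using u Suc by (simp add: c'_def)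
          moreover have "u + a < length d" using u lenr n_def True by auto
          ultimately show ?thesis by force
        qed
      qed
    qed
    have cd: "card {u. u < length d \<and> c' u = c' v} \<le> Suc (d!v)" if v: "v < length d" for v
    proof (cases "v < a")
      case True
      have "{u. u < length d \<and> c' u = c' v} = {..<a}"
        using True \<open>a < n\<close> n_def by (auto simp: c'_def)
      moreover have "d!0 \<le> d!v" using less.prems(1) that by (simp add: sorted_iff_nth_mono)
      ultimately show ?thesis by (simp add: a_def)
    next
      case False
      have "{u. u < length d \<and> c' u = c' v} = (\<lambda>u. u + a) ` {u. u < length r \<and> c u = c (v - a)}"
      proof
        show "{u. u < length d \<and> c' u = c' v} \<subseteq> (\<lambda>u. u + a) ` {u. u < length r \<and> c u = c (v - a)}"
        proof
          fix u assume u: "u \<in> {u. u < length d \<and> c' u = c' v}"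
          then have "\<not> u < a" using False by (auto simp: c'_def split: if_splits)
          then have "u = (u - a) + a" "u - a < length r" "c (u - a) = c (v - a)"
            using u False lenr n_def by (auto simp: c'_def)
          then show "u \<in> (\<lambda>u. u + a) ` {u. u < length r \<and> c u = c (v - a)}" by blast
        qed
        show "(\<lambda>u. u + a) ` {u. u < length r \<and> c u = c (v - a)} \<subseteq> {u. u < length d \<and> c' u = c' v}"
          using False lenr n_def True by (auto simp: c'_def)
      qed
      then have "card {u. u < length d \<and> c' u = c' v} = card {u. u < length r \<and> c u = c (v - a)}"
        by (simp add: card_image inj_on_def)
      also have "\<dots> \<le> Suc (r ! (v - a))" using cc False v lenr n_def by auto
      also have "r ! (v - a) = d ! v" using False True n_def by (simp add: r_def)
      finally show ?thesis .
    qed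
    show ?thesis using k idx im cd by (intro exI[of _ "Suc k"] exI[of _ c']) simp
  qed
qed

lemma gval_eq:
  assumes "\<forall>m. idx d m \<noteq> None \<longleftrightarrow> m < k" "k \<ge> 1"
  shows "gval d = k"
proof -
  have "{i. 1 \<le> i \<and> fseq d i < \<infinity>} = {1..k}"
  proof (intro set_eqI iffI)
    fix i assume "i \<in> {i. 1 \<le> i \<and> fseq d i < \<infinity>}"
    then have "1 \<le> i" "idx d (i - 1) \<noteq> None" by (auto simp: fseq_def split: option.splits)
    then show "i \<in> {1..k}" using assms by auto
  next
    fix i assume i: "i \<in> {1..k}"
    have "i - 1 < k" using i by auto
    then have "idx d (i - 1) \<noteq> None" using assms(1) by blast
    then obtain j where "idx d (i - 1) = Some j" by blast
    then show "i \<in> {i. 1 \<le> i \<and> fseq d i < \<infinity>}" using i by (simp add: fseq_def)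
  qed
  then have "gval d = Max {1..k}" by (simp add: gval_def)
  also have "\<dots> = k" using assms(2) by (intro Max_eqI) auto
  finally show ?thesis .
qed

lemma len_filter_take_le: "length (filter P (take n xs)) \<le> length (filter P xs)"
proof -
  have "filter P xs = filter P (take n xs) @ filter P (drop n xs)"
    using filter_append[of P "take n xs" "drop n xs"] by simp
  then show ?thesis by (metis le_add1 length_append)
qed

lemma len_filter_mset: "mset s = mset w \<Longrightarrow> length (filter P s) = length (filter P w)"
  by (metis mset_filter size_mset)

lemma sort_le:
  fixes w d :: "nat list"
  assumes "sorted d" "length w = length d" "\<forall>i<length d. w!i \<le> d!i" "i < length d"
  shows "sort w ! i \<le> d ! i"
proof (rule ccontr)
  define s where "s = sort w"
  define x where "x = s ! i"
  assume "\<not> sort w ! i \<le> d ! i"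
  then have xd: "d ! i < x" by (simp add: x_def s_def)
  have ls: "length s = length d" using assms by (simp add: s_def)
  have A: "filter (\<lambda>y. y < x) (take (Suc i) w) = take (Suc i) w"
  proof (rule filter_True, intro ballI)
    fix y assume "y \<in> set (take (Suc i) w)"
    then obtain j where j: "j < length (take (Suc i) w)" "y = take (Suc i) w ! j"
      by (auto simp: in_set_conv_nth)
    then have ji: "j \<le> i" "j < length d" using assms by auto
    then have "y \<le> d ! j" using j assms by simp
    moreover have "d ! j \<le> d ! i" using ji assms by (simp add: sorted_iff_nth_mono)
    ultimately show "y < x" using xd by simp
  qed
  have "Suc i = length (filter (\<lambda>y. y < x) (take (Suc i) w))" using A assms by simp
  also have "\<dots> \<le> length (filter (\<lambda>y. y < x) w)" by (rule len_filter_take_le)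
  also have "\<dots> = length (filter (\<lambda>y. y < x) s)"
    by (rule len_filter_mset[symmetric]) (simp add: s_def)
  also have "\<dots> \<le> i"
  proof -
    have "filter (\<lambda>y. y < x) (drop i s) = []"
    proof (rule filter_False, intro ballI)
      fix y assume "y \<in> set (drop i s)"
      then obtain j where j: "j < length (drop i s)" "y = drop i s ! j"
        by (auto simp: in_set_conv_nth)
      have "sorted s" by (simp add: s_def)
      moreover have "i \<le> i + j" "i + j < length s" using j by auto
      ultimately have "s ! i \<le> s ! (i + j)" by (simp add: sorted_iff_nth_mono)
      moreover have "y = s ! (i + j)" using j by simp
      ultimately show "\<not> y < x" by (simp add: x_def)
    qed
    moreover have "filter (\<lambda>y. y < x) s = filter (\<lambda>y. y < x) (take i s) @ filter (\<lambda>y. y < x) (drop i s)"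
      using filter_append[of "\<lambda>y. y < x" "take i s" "drop i s"] by simp
    ultimately have "filter (\<lambda>y. y < x) s = filter (\<lambda>y. y < x) (take i s)" by simp
    moreover have "length (filter (\<lambda>y. y < x) (take i s)) \<le> length (take i s)" by (rule length_filter_le)
    ultimately show ?thesis by simp
  qed
  finally show False by simp
qed

lemma clique_graph:
  fixes c :: "nat \<Rightarrow> nat"
  assumes ci: "c ` {..<n} = {..<k}"
  defines "E \<equiv> \<lambda>i j. i < n \<and> j < n \<and> i \<noteq> j \<and> c i = c j"
  defines "dl \<equiv> map (\<lambda>i. card {u. u < n \<and> c u = c i} - 1) [0..<n]"
  shows "realizes E dl" "disjoint_union_of_cliques n E k" "independence_number n E = k"
proof -
  show "realizes E dl"
    unfolding realizes_def
  proof (intro conjI allI impI)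
    fix i assume i: "i < length dl"
    have "{j. j < length dl \<and> E i j} = {u. u < n \<and> c u = c i} - {i}"
      using i by (auto simp: dl_def E_def)
    then show "card {j. j < length dl \<and> E i j} = dl ! i"
      using i by (simp add: dl_def)
  qed (auto simp: E_def dl_def)
  show "disjoint_union_of_cliques n E k"
    unfolding disjoint_union_of_cliques_def
    by (rule exI[of _ c]) (auto simp: ci E_def)
  define P where "P = {card S | S. S \<subseteq> {..<n} \<and> (\<forall>x\<in>S. \<forall>y\<in>S. \<not> E x y)}"
  have ub: "y \<le> k" if "y \<in> P" for y
  proof -
    obtain S where S: "y = card S" "S \<subseteq> {..<n}" "\<forall>x\<in>S. \<forall>y\<in>S. \<not> E x y"
      using \<open>y \<in> P\<close> by (auto simp: P_def)
    have "inj_on c S"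
    proof (rule inj_onI)
      fix x y assume "x \<in> S" "y \<in> S" "c x = c y"
      then show "x = y" using S unfolding E_def by blast
    qed
    moreover have "c ` S \<subseteq> {..<k}"
    proof -
      have "c ` S \<subseteq> c ` {..<n}" using S(2) by (rule image_mono)
      then show ?thesis using ci by simp
    qed
    ultimately have "card S \<le> card {..<k}"
      using card_image[of c S] card_mono[of "{..<k}" "c ` S"] by simp
    then show ?thesis using S by simp
  qed
  have kin: "k \<in> P"
  proof -
    define rep where "rep = (\<lambda>m. SOME v. v < n \<and> c v = m)"
    have rep: "rep m < n \<and> c (rep m) = m" if "m < k" for m
    proof -
      have "m \<in> c ` {..<n}" using ci that by auto
      then have "\<exists>v. v < n \<and> c v = m" by auto
      then show ?thesis unfolding rep_def by (rule someI_ex)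
    qed
    have inj: "inj_on rep {..<k}"
    proof (rule inj_onI)
      fix x y assume "x \<in> {..<k}" "y \<in> {..<k}" "rep x = rep y"
      then show "x = y" using rep by (metis lessThan_iff)
    qed
    have "card (rep ` {..<k}) = k" using inj by (simp add: card_image)
    moreover have "rep ` {..<k} \<subseteq> {..<n}" using rep by auto
    moreover have "\<forall>x\<in>rep ` {..<k}. \<forall>y\<in>rep ` {..<k}. \<not> E x y"
      using rep by (auto simp: E_def)
    ultimately show ?thesis unfolding P_def
      by (intro CollectI exI[of _ "rep ` {..<k}"]) simp
  qed
  have fin: "finite P" using ub by (meson finite_nat_set_iff_bounded_le)
  show "independence_number n E = k"
    unfolding independence_number_def P_def[symmetric]
    using fin ub kin by (intro Max_eqI) auto
qed

theorem mainTheorem8: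
  fixes d :: "nat list"
  assumes "graphical d" and "length d \<ge> 1"
  shows "(\<exists>d'. graphical d' \<and> minorizes d' d \<and>
            (\<exists>E. realizes E d' \<and> disjoint_union_of_cliques (length d) E (gval d)
                 \<and> independence_number (length d) E = gval d))
       \<and> (\<forall>k::nat. k > gval d \<longrightarrow>
            (\<exists>d'. graphical d' \<and> minorizes d' d \<and>
               (\<exists>E. realizes E d' \<and> independence_number (length d) E < k)))"
proof -
  define n where "n = length d"
  have sd: "sorted d" using assms(1) by (simp add: graphical_def)
  obtain k c0 where k: "k \<ge> 1" and ki: "\<forall>m. idx d m \<noteq> None \<longleftrightarrow> m < k"
    and ci: "c0 ` {..<n} = {..<k}"
    and cc: "\<forall>v<n. card {u. u < n \<and> c0 u = c0 v} \<le> Suc (d!v)"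
    using main_color[OF sd assms(2)] unfolding n_def by blast
  have gk: "gval d = k" by (rule gval_eq[OF ki k])
  define w where "w = map (\<lambda>v. card {u. u < n \<and> c0 u = c0 v} - 1) [0..<n]"
  have lw: "length w = n" by (simp add: w_def)
  have wd: "\<forall>i<length d. w!i \<le> d!i" using cc by (auto simp: w_def n_def)
  define d' where "d' = sort w"
  have "mset d' = mset w" by (simp add: d'_def)
  then obtain f where f: "bij_betw f {..<length d'} {..<length w}"
    and fn: "\<forall>i<length d'. d' ! i = w ! (f i)"
    using permutation_Ex_bij by blast
  have ld': "length d' = n" by (simp add: d'_def lw)
  have fb: "bij_betw f {..<n} {..<n}" using f ld' lw by simp
  define c where "c = c0 \<circ> f"
  have cim: "c ` {..<n} = {..<k}"
  proof -
    have "c ` {..<n} = c0 ` (f ` {..<n})" by (simp add: c_def image_comp)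
    then show ?thesis using bij_betw_imp_surj_on[OF fb] ci by simp
  qed
  have d'eq: "d' = map (\<lambda>i. card {u. u < n \<and> c u = c i} - 1) [0..<n]"
  proof (rule nth_equalityI)
    show "length d' = length (map (\<lambda>i. card {u. u < n \<and> c u = c i} - 1) [0..<n])" by (simp add: ld')
  next
    fix i assume "i < length d'"
    then have i: "i < n" using ld' by simp
    have fi: "f i < n" using fb i by (meson bij_betwE lessThan_iff)
    have "{u. u < n \<and> c0 u = c0 (f i)} = f ` {u. u < n \<and> c u = c i}"
    proof (intro set_eqI iffI)
      fix u assume u: "u \<in> {u. u < n \<and> c0 u = c0 (f i)}"
      then have "u \<in> f ` {..<n}" using bij_betw_imp_surj_on[OF fb] by auto
      then obtain v where "v < n" "u = f v" by auto
      then show "u \<in> f ` {u. u < n \<and> c u = c i}" using u by (auto simp: c_def)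
    next
      fix u assume "u \<in> f ` {u. u < n \<and> c u = c i}"
      then obtain v where v: "v < n" "c v = c i" "u = f v" by auto
      then have "f v < n" using fb by (meson bij_betwE lessThan_iff)
      then show "u \<in> {u. u < n \<and> c0 u = c0 (f i)}" using v by (simp add: c_def)
    qed
    moreover have "inj_on f {u. u < n \<and> c u = c i}"
      using bij_betw_imp_inj_on[OF fb] by (rule inj_on_subset) auto
    ultimately have "card {u. u < n \<and> c0 u = c0 (f i)} = card {u. u < n \<and> c u = c i}"
      by (simp add: card_image)
    then show "d' ! i = map (\<lambda>i. card {u. u < n \<and> c u = c i} - 1) [0..<n] ! i"
      using fn i fi ld' by (simp add: w_def)
  qed
  define E where "E = (\<lambda>i j. i < n \<and> j < n \<and> i \<noteq> j \<and> c i = c j)"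
  have R: "realizes E d'" "disjoint_union_of_cliques n E k" "independence_number n E = k"
    using clique_graph[OF cim] unfolding d'eq E_def by blast+
  have gd: "graphical d'" using R(1) by (auto simp: graphical_def d'_def)
  have md: "minorizes d' d"
    unfolding minorizes_def using sort_le[OF sd _ wd] lw ld' by (auto simp: d'_def n_def)
  show ?thesis
  proof (intro conjI allI impI)
    show "\<exists>d'. graphical d' \<and> minorizes d' d \<and>
            (\<exists>E. realizes E d' \<and> disjoint_union_of_cliques (length d) E (gval d)
                 \<and> independence_number (length d) E = gval d)"
      unfolding gk n_def[symmetric] using gd md R by blast
    fix k' :: nat assume "k' > gval d"
    then show "\<exists>d'. graphical d' \<and> minorizes d' d \<and>
               (\<exists>E. realizes E d' \<and> independence_number (length d) E < k')"
      unfolding n_def[symmetric] using gd md R gk \<open>k' > gval d\<close> by auto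
  qed
qed

end
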